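(* Consider the ride-hailing model in the context. The optimal value of $\mathcal{OPT}$ (the optimal platform profit), viewed as a function of the AV fleet mass $M$ and of the CV fleet mass $N$ with all other parameters fixed, is non-decreasing in $M$ and non-decreasing in $N$.
   Context: Model. There are $L$ regions $\{1,\dots,L\}$. For regions $i,j$, $b_{ij}\ge0$ is the customer rate from $i$ to $j$; $b_i=\sum_j b_{ij}$ (assumed $>0$), $q_{ij}=b_{ij}/b_i$. Travel times satisfy $t_{ij}>0$ for $i\ne j$, $t_{ii}=0$. Constants: $p>0$, $c\ge0$, $R\in(0,1)$, CV fleet mass $N>0$, AV fleet mass $M\ge0$. For $i,\alpha$: $\tau^{dr}_{i\alpha}=t_{i\alpha}+\sum_j q_{\alpha j}t_{\alpha j}$, $r^A_{i\alpha}=p\sum_j q_{\alpha j}t_{\alpha j}-c\tau^{dr}_{i\alpha}$, $r^C_{i\alpha}=p(1-R)\sum_j q_{\alpha j}t_{\alpha j}-c\tau^{dr}_{i\alpha}$, $r^{C2P}_{i\alpha}=pR\sum_j q_{\alpha j}t_{\alpha j}$. A matrix $\bm x\in\mathbb R^{L\times L}_{\ge0}$ satisfies flow balance if $\sum_j(\sum_k x_{kj})q_{ji}=\sum_\alpha x_{i\alpha}$ for all $i$. $\mathcal{CV}(\bm b^C)$: maximize $N\log\sum_{i,\alpha}r^C_{i\alpha}x_{i\alpha}-\sum_{i,\alpha}\tau^{dr}_{i\alpha}x_{i\alpha}$ over $\bm x\ge0$ satisfying flow balance and $\sum_j x_{ji}\le b^C_i$ for all $i$; $\pi(\bm b^C)=\sum_{i,\alpha}r^{C2P}_{i\alpha}x_{i\alpha}$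 for an optimal solution $\bm x$ (same for all optimal solutions). $\mathcal{OPT}$: maximize $\sum_{i,\alpha}r^A_{i\alpha}x^A_{i\alpha}+\pi(\bm b^C)$ over $\bm b^C\in\mathbb R^L_{\ge0}$, $\bm x^A\in\mathbb R^{L\times L}_{\ge0}$ subject to $\sum_j x^A_{ji}+b^C_i\le b_i$ for all $i$, flow balance for $\bm x^A$, and $\sum_{i,\alpha}\tau^{dr}_{i\alpha}x^A_{i\alpha}\le M$. *)

theory Defs
  imports "HOL-Analysis.Analysis" "HOL-Library.Extended_Real"
begin

(* Regions are the elements of a finite type 'l. *)

definition bsum :: "('l::finite \<Rightarrow> 'l \<Rightarrow> real) \<Rightarrow> 'l \<Rightarrow> real" where
  "bsum b i = (\<Sum>j\<in>UNIV. b i j)"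

definition qq :: "('l::finite \<Rightarrow> 'l \<Rightarrow> real) \<Rightarrow> 'l \<Rightarrow> 'l \<Rightarrow> real" where
  "qq b i j = b i j / bsum b i"

(* expected trip time from alpha: sum_j q_{alpha j} t_{alpha j} *)
definition trip :: "('l::finite \<Rightarrow> 'l \<Rightarrow> real) \<Rightarrow> ('l \<Rightarrow> 'l \<Rightarrow> real) \<Rightarrow> 'l \<Rightarrow> real" where
  "trip b t \<alpha> = (\<Sum>j\<in>UNIV. qq b \<alpha> j * t \<alpha> j)"

definition tau_dr :: "('l::finite \<Rightarrow> 'l \<Rightarrow> real) \<Rightarrow> ('l \<Rightarrow> 'l \<Rightarrow> real) \<Rightarrow> 'l \<Rightarrow> 'l \<Rightarrow> real" where
  "tau_dr b t i \<alpha> = t i \<alpha> + trip b t \<alpha>"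

definition rA :: "real \<Rightarrow> real \<Rightarrow> ('l::finite \<Rightarrow> 'l \<Rightarrow> real) \<Rightarrow> ('l \<Rightarrow> 'l \<Rightarrow> real) \<Rightarrow> 'l \<Rightarrow> 'l \<Rightarrow> real" where
  "rA p c b t i \<alpha> = p * trip b t \<alpha> - c * tau_dr b t i \<alpha>"

definition rC :: "real \<Rightarrow> real \<Rightarrow> real \<Rightarrow> ('l::finite \<Rightarrow> 'l \<Rightarrow> real) \<Rightarrow> ('l \<Rightarrow> 'l \<Rightarrow> real) \<Rightarrow> 'l \<Rightarrow> 'l \<Rightarrow> real" where
  "rC p c R b t i \<alpha> = p * (1 - R) * trip b t \<alpha> - c * tau_dr b t i \<alpha>"

definition rC2P :: "real \<Rightarrow> real \<Rightarrow> ('l::finite \<Rightarrow> 'l \<Rightarrow> real) \<Rightarrow> ('l \<Rightarrow> 'l \<Rightarrow> real) \<Rightarrow> 'l \<Rightarrow> 'l \<Rightarrow> real" where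
  "rC2P p R b t i \<alpha> = p * R * trip b t \<alpha>"

definition flow_balance :: "('l::finite \<Rightarrow> 'l \<Rightarrow> real) \<Rightarrow> ('l \<Rightarrow> 'l \<Rightarrow> real) \<Rightarrow> bool" where
  "flow_balance b x \<longleftrightarrow>
     (\<forall>i. (\<Sum>j\<in>UNIV. (\<Sum>k\<in>UNIV. x k j) * qq b j i) = (\<Sum>\<alpha>\<in>UNIV. x i \<alpha>))"

definition cv_feasible :: "('l::finite \<Rightarrow> 'l \<Rightarrow> real) \<Rightarrow> ('l \<Rightarrow> real) \<Rightarrow> ('l \<Rightarrow> 'l \<Rightarrow> real) \<Rightarrow> bool" where
  "cv_feasible b bC x \<longleftrightarrow>
     (\<forall>i \<alpha>. 0 \<le> x i \<alpha>) \<and> flow_balance b x \<and> (\<forall>i. (\<Sum>j\<in>UNIV. x j i) \<le> bC i)"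

definition cv_obj :: "real \<Rightarrow> real \<Rightarrow> real \<Rightarrow> ('l::finite \<Rightarrow> 'l \<Rightarrow> real) \<Rightarrow> ('l \<Rightarrow> 'l \<Rightarrow> real)
    \<Rightarrow> real \<Rightarrow> ('l \<Rightarrow> 'l \<Rightarrow> real) \<Rightarrow> ereal" where
  "cv_obj p c R b t N x =
     (let u = (\<Sum>i\<in>UNIV. \<Sum>\<alpha>\<in>UNIV. rC p c R b t i \<alpha> * x i \<alpha>);
          v = (\<Sum>i\<in>UNIV. \<Sum>\<alpha>\<in>UNIV. tau_dr b t i \<alpha> * x i \<alpha>)
      in if 0 < u then ereal (N * ln u - v) else -\<infinity>)"

definition cv_optimal :: "real \<Rightarrow> real \<Rightarrow> real \<Rightarrow> ('l::finite \<Rightarrow> 'l \<Rightarrow> real) \<Rightarrow> ('l \<Rightarrow> 'l \<Rightarrow> real)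
    \<Rightarrow> real \<Rightarrow> ('l \<Rightarrow> real) \<Rightarrow> ('l \<Rightarrow> 'l \<Rightarrow> real) \<Rightarrow> bool" where
  "cv_optimal p c R b t N bC x \<longleftrightarrow>
     cv_feasible b bC x \<and>
     (\<forall>y. cv_feasible b bC y \<longrightarrow> cv_obj p c R b t N y \<le> cv_obj p c R b t N x)"

definition cv_pi :: "real \<Rightarrow> real \<Rightarrow> real \<Rightarrow> ('l::finite \<Rightarrow> 'l \<Rightarrow> real) \<Rightarrow> ('l \<Rightarrow> 'l \<Rightarrow> real)
    \<Rightarrow> real \<Rightarrow> ('l \<Rightarrow> real) \<Rightarrow> real" where
  "cv_pi p c R b t N bC =
     (let x = (SOME x. cv_optimal p c R b t N bC x)
      in (\<Sum>i\<in>UNIV. \<Sum>\<alpha>\<in>UNIV. rC2P p R b t i \<alpha> * x i \<alpha>))"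

definition opt_feasible :: "('l::finite \<Rightarrow> 'l \<Rightarrow> real) \<Rightarrow> ('l \<Rightarrow> 'l \<Rightarrow> real) \<Rightarrow> real
    \<Rightarrow> ('l \<Rightarrow> real) \<Rightarrow> ('l \<Rightarrow> 'l \<Rightarrow> real) \<Rightarrow> bool" where
  "opt_feasible b t M bC xA \<longleftrightarrow>
     (\<forall>i. 0 \<le> bC i) \<and> (\<forall>i \<alpha>. 0 \<le> xA i \<alpha>) \<and>
     (\<forall>i. (\<Sum>j\<in>UNIV. xA j i) + bC i \<le> bsum b i) \<and>
     flow_balance b xA \<and>
     (\<Sum>i\<in>UNIV. \<Sum>\<alpha>\<in>UNIV. tau_dr b t i \<alpha> * xA i \<alpha>) \<le> M"

definition opt_obj :: "real \<Rightarrow> real \<Rightarrow> real \<Rightarrow> ('l::finite \<Rightarrow> 'l \<Rightarrow> real) \<Rightarrow> ('l \<Rightarrow> 'l \<Rightarrow> real)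
    \<Rightarrow> real \<Rightarrow> ('l \<Rightarrow> real) \<Rightarrow> ('l \<Rightarrow> 'l \<Rightarrow> real) \<Rightarrow> real" where
  "opt_obj p c R b t N bC xA =
     (\<Sum>i\<in>UNIV. \<Sum>\<alpha>\<in>UNIV. rA p c b t i \<alpha> * xA i \<alpha>) + cv_pi p c R b t N bC"

definition opt_value :: "real \<Rightarrow> real \<Rightarrow> real \<Rightarrow> ('l::finite \<Rightarrow> 'l \<Rightarrow> real) \<Rightarrow> ('l \<Rightarrow> 'l \<Rightarrow> real)
    \<Rightarrow> real \<Rightarrow> real \<Rightarrow> real" where
  "opt_value p c R b t N M =
     Sup {opt_obj p c R b t N bC xA | bC xA. opt_feasible b t M bC xA}"

end

theory Submission
  imports Defs
begin

definition xof :: "real^('l::finite \<times> 'l) \<Rightarrow> 'l \<Rightarrow> 'l \<Rightarrow> real" where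
  "xof X = (\<lambda>i a. X $ (i, a))"

definition vof :: "('l::finite \<Rightarrow> 'l \<Rightarrow> real) \<Rightarrow> real^('l \<times> 'l)" where
  "vof x = (\<chi> k. x (fst k) (snd k))"

lemma xof_vof[simp]: "xof (vof x) = x"
  unfolding xof_def vof_def by simp

lemma cv_feasible_zero:
  assumes "\<And>i. 0 \<le> bC i"
  shows "cv_feasible b bC (\<lambda>i a. 0)"
  using assms unfolding cv_feasible_def flow_balance_def by simp

lemma cv_exists_opt:
  fixes b t :: "'l::finite \<Rightarrow> 'l \<Rightarrow> real"
  assumes bC: "\<And>i. 0 \<le> bC i" and N: "0 < N"
    and tau: "\<And>i a. 0 \<le> tau_dr b t i a"
  shows "\<exists>x. cv_optimal p c R b t N bC x"
proof -
  define U where "U = (\<lambda>x::'l\<Rightarrow>'l\<Rightarrow>real. \<Sum>i\<in>UNIV. \<Sum>\<alpha>\<in>UNIV. rC p c R b t i \<alpha> * x i \<alpha>)"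
  define V where "V = (\<lambda>x::'l\<Rightarrow>'l\<Rightarrow>real. \<Sum>i\<in>UNIV. \<Sum>\<alpha>\<in>UNIV. tau_dr b t i \<alpha> * x i \<alpha>)"
  have obj: "cv_obj p c R b t N x = (if 0 < U x then ereal (N * ln (U x) - V x) else -\<infinity>)" for x
    unfolding cv_obj_def U_def V_def Let_def by simp
  have Vnn: "cv_feasible b bC x \<Longrightarrow> 0 \<le> V x" for x
    unfolding V_def cv_feasible_def using tau by (auto intro!: sum_nonneg)
  show ?thesis
  proof (cases "\<exists>y. cv_feasible b bC y \<and> 0 < U y")
    case False
    then show ?thesis
      using cv_feasible_zero[OF bC] unfolding cv_optimal_def obj
      by (intro exI[of _ "\<lambda>i a. 0"]) auto
  next
    case True
    then obtain x0 where x0: "cv_feasible b bC x0" "0 < U x0" by auto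
    define f0 where "f0 = N * ln (U x0) - V x0"
    define \<delta> where "\<delta> = exp (f0 / N)"
    have dpos: "0 < \<delta>" unfolding \<delta>_def by simp
    have "f0 \<le> N * ln (U x0)" unfolding f0_def using Vnn[OF x0(1)] by simp
    then have "f0 / N \<le> ln (U x0)" using N by (simp add: field_simps)
    then have dle: "\<delta> \<le> U x0" unfolding \<delta>_def using x0(2)
      by (metis exp_le_cancel_iff exp_ln)
    define K where "K = {X. cv_feasible b bC (xof X) \<and> \<delta> \<le> U (xof X)}"
    define f where "f = (\<lambda>X. N * ln (U (xof X)) - V (xof X))"
    have x0K: "vof x0 \<in> K" unfolding K_def using x0 dle by simp
    have closedK: "closed K"
      unfolding K_def cv_feasible_def flow_balance_def U_def V_def xof_def
      by (intro closed_Collect_conj closed_Collect_all closed_Collect_le closed_Collect_eq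
          continuous_intros)
    have bnd: "X \<in> K \<Longrightarrow> X \<in> cbox 0 (\<chi> k. bC (snd k))" for X
    proof -
      assume "X \<in> K"
      then have F: "cv_feasible b bC (xof X)" unfolding K_def by simp
      have "X $ k \<le> bC (snd k)" for k
      proof -
        obtain i a where k: "k = (i, a)" by (cases k)
        have "X $ (i,a) \<le> (\<Sum>j\<in>UNIV. xof X j a)"
          using F unfolding cv_feasible_def
          by (auto intro!: member_le_sum[of i UNIV "\<lambda>j. xof X j a", simplified xof_def]
              simp: xof_def)
        also have "\<dots> \<le> bC a" using F unfolding cv_feasible_def by simp
        finally show ?thesis using k by simp
      qed
      moreover have "0 \<le> X $ k" for k
        using F unfolding cv_feasible_def xof_def by (cases k) auto
      ultimately show ?thesis by (simp add: mem_box_cart)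
    qed
    have compK: "compact K"
      using closedK bnd by (meson compact_cbox bounded_cbox bounded_subset compact_eq_bounded_closed subsetI)
    have contf: "continuous_on K f"
      unfolding f_def
    proof (intro continuous_intros)
      show "continuous_on K (\<lambda>X. U (xof X))" unfolding U_def xof_def by (intro continuous_intros)
      show "continuous_on K (\<lambda>X. V (xof X))" unfolding V_def xof_def by (intro continuous_intros)
      show "\<forall>X\<in>K. U (xof X) \<noteq> 0" unfolding K_def using dpos by auto
    qed
    obtain Xm where Xm: "Xm \<in> K" "\<And>Y. Y \<in> K \<Longrightarrow> f Y \<le> f Xm"
      using continuous_attains_sup[OF compK _ contf] x0K by blast
    have f0le: "f0 \<le> f Xm" using Xm(2)[OF x0K] unfolding f_def f0_def by simp
    have Um: "0 < U (xof Xm)" using Xm(1) dpos unfolding K_def by auto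
    show ?thesis
    proof (intro exI[of _ "xof Xm"])
      show "cv_optimal p c R b t N bC (xof Xm)"
        unfolding cv_optimal_def
      proof (intro conjI allI impI)
        show "cv_feasible b bC (xof Xm)" using Xm(1) unfolding K_def by simp
        fix y assume y: "cv_feasible b bC y"
        show "cv_obj p c R b t N y \<le> cv_obj p c R b t N (xof Xm)"
        proof (cases "0 < U y")
          case False then show ?thesis unfolding obj by simp
        next
          case Uy: True
          show ?thesis
          proof (cases "\<delta> \<le> U y")
            case True
            then have "vof y \<in> K" unfolding K_def using y by simp
            from Xm(2)[OF this] show ?thesis unfolding obj f_def using Uy Um by simp
          next
            case False
            have "N * ln (U y) < N * ln \<delta>" using False Uy N by simp
            also have "N * ln \<delta> = f0" unfolding \<delta>_def using N by simp
            finally have "N * ln (U y) - V y < f Xm" using Vnn[OF y] f0le by linarith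
            then show ?thesis unfolding obj f_def using Uy Um by simp
          qed
        qed
      qed
    qed
  qed
qed


lemma sum_rC:
  "(\<Sum>i\<in>UNIV. \<Sum>\<alpha>\<in>UNIV. rC p c R b t i \<alpha> * x i \<alpha>) =
   p * (1 - R) * (\<Sum>i\<in>UNIV. \<Sum>\<alpha>\<in>UNIV. trip b t \<alpha> * x i \<alpha>)
   - c * (\<Sum>i\<in>UNIV. \<Sum>\<alpha>\<in>UNIV. tau_dr b t i \<alpha> * x i \<alpha>)"
  unfolding rC_def by (simp add: sum_subtractf sum_distrib_left sum.distrib algebra_simps)

lemma sum_rC2P:
  "(\<Sum>i\<in>UNIV. \<Sum>\<alpha>\<in>UNIV. rC2P p R b t i \<alpha> * x i \<alpha>) =
   p * R * (\<Sum>i\<in>UNIV. \<Sum>\<alpha>\<in>UNIV. trip b t \<alpha> * x i \<alpha>)"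
  unfolding rC2P_def by (simp add: sum_distrib_left algebra_simps)

lemma pi_mono_N:
  fixes b t :: "'l::finite \<Rightarrow> 'l \<Rightarrow> real"
  assumes bC: "\<And>i. 0 \<le> bC i" and N: "0 < N" and NN: "N \<le> N'"
    and tau: "\<And>i a. 0 \<le> tau_dr b t i a"
    and p: "0 < p" and R: "R < 1" and c: "0 \<le> c" and R0: "0 < R"
  shows "cv_pi p c R b t N bC \<le> cv_pi p c R b t N' bC"
proof -
  define U where "U = (\<lambda>x::'l\<Rightarrow>'l\<Rightarrow>real. \<Sum>i\<in>UNIV. \<Sum>\<alpha>\<in>UNIV. rC p c R b t i \<alpha> * x i \<alpha>)"
  define V where "V = (\<lambda>x::'l\<Rightarrow>'l\<Rightarrow>real. \<Sum>i\<in>UNIV. \<Sum>\<alpha>\<in>UNIV. tau_dr b t i \<alpha> * x i \<alpha>)"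
  define A where "A = (\<lambda>x::'l\<Rightarrow>'l\<Rightarrow>real. \<Sum>i\<in>UNIV. \<Sum>\<alpha>\<in>UNIV. trip b t \<alpha> * x i \<alpha>)"
  have UA: "U x = p * (1 - R) * A x - c * V x" for x
    unfolding U_def A_def V_def by (rule sum_rC)
  have piA: "cv_pi p c R b t M bC = p * R * A (SOME x. cv_optimal p c R b t M bC x)" for M
    unfolding cv_pi_def Let_def A_def by (rule sum_rC2P)
  have obj: "cv_obj p c R b t M x = (if 0 < U x then ereal (M * ln (U x) - V x) else -\<infinity>)" for x M
    unfolding cv_obj_def U_def V_def Let_def by simp
  define x where "x = (SOME x. cv_optimal p c R b t N bC x)"
  define x' where "x' = (SOME x. cv_optimal p c R b t N' bC x)"
  have ox: "cv_optimal p c R b t N bC x"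
    using cv_exists_opt[OF bC N tau] unfolding x_def by (rule someI_ex)
  have ox': "cv_optimal p c R b t N' bC x'"
  proof -
    have "0 < N'" using N NN by simp
    from cv_exists_opt[OF bC this tau] show ?thesis unfolding x'_def by (rule someI_ex)
  qed
  show ?thesis
  proof (cases "\<exists>y. cv_feasible b bC y \<and> 0 < U y")
    case False
    have "cv_optimal p c R b t M bC = cv_feasible b bC" for M
      using False unfolding cv_optimal_def obj by (auto intro!: ext)
    then show ?thesis unfolding cv_pi_def by simp
  next
    case True
    then obtain y where y: "cv_feasible b bC y" "0 < U y" by auto
    have Ux: "0 < U x"
    proof (rule ccontr)
      assume "\<not> 0 < U x"
      then show False using ox y unfolding cv_optimal_def obj by (auto split: if_splits)
    qed
    have Ux': "0 < U x'"
    proof (rule ccontr)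
      assume "\<not> 0 < U x'"
      then show False using ox' y unfolding cv_optimal_def obj by (auto split: if_splits)
    qed
    have i1: "N * ln (U x') - V x' \<le> N * ln (U x) - V x"
      using ox ox' Ux Ux' unfolding cv_optimal_def obj by force
    have i2: "N' * ln (U x) - V x \<le> N' * ln (U x') - V x'"
      using ox ox' Ux Ux' unfolding cv_optimal_def obj by force
    show ?thesis
    proof (cases "N = N'")
      case True then show ?thesis by simp
    next
      case False
      then have NN': "N < N'" using NN by simp
      have "(N' - N) * (ln (U x') - ln (U x)) \<ge> 0" using i1 i2 by (simp add: algebra_simps)
      then have L: "ln (U x) \<le> ln (U x')" using NN'
        by (simp add: zero_le_mult_iff)
      then have Ule: "U x \<le> U x'" using Ux Ux' by simp
      have "N * (ln (U x') - ln (U x)) \<ge> 0" using L N by simp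
      then have Vle: "V x \<le> V x'" using i1 by (simp add: algebra_simps)
      have "p * (1 - R) * A x \<le> p * (1 - R) * A x'"
        using UA[of x] UA[of x'] Ule Vle c mult_left_mono[OF Vle c] by linarith
      then have "A x \<le> A x'" using p R by simp
      then show ?thesis unfolding piA x_def[symmetric] x'_def[symmetric]
        using p R0 by simp
    qed
  qed
qed


theorem lemma2:
  fixes b t :: "'l::finite \<Rightarrow> 'l \<Rightarrow> real"
    and p c R N M :: real
  assumes b_nonneg: "\<And>i j. 0 \<le> b i j"
    and b_pos: "\<And>i. 0 < bsum b i"
    and t_pos: "\<And>i j. i \<noteq> j \<Longrightarrow> 0 < t i j"
    and t_diag: "\<And>i. t i i = 0"
    and p_pos: "0 < p" and c_nonneg: "0 \<le> c"
    and R_pos: "0 < R" and R_lt1: "R < 1"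
    and N_pos: "0 < N" and M_nonneg: "0 \<le> M"
  shows "mono_on {0..} (\<lambda>M'. opt_value p c R b t N M') \<and>
         mono_on {0<..} (\<lambda>N'. opt_value p c R b t N' M)"
proof -
  have t_nn: "0 \<le> t i j" for i j using t_pos[of i j] t_diag[of i] by (cases "i = j") auto
  have qq_nn: "0 \<le> qq b i j" for i j unfolding qq_def using b_nonneg[of i j] b_pos[of i] by simp
  have trip_nn: "0 \<le> trip b t a" for a unfolding trip_def using qq_nn t_nn by (auto intro!: sum_nonneg)
  have tau: "0 \<le> tau_dr b t i a" for i a unfolding tau_dr_def using trip_nn t_nn by (simp add: add_nonneg_nonneg)
  define S where "S = (\<lambda>N' M'. {opt_obj p c R b t N' bC xA | bC xA. opt_feasible b t M' bC xA})"
  have ov: "opt_value p c R b t N' M' = Sup (S N' M')" for N' M' unfolding opt_value_def S_def by simp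
  have ne: "S N' M' \<noteq> {}" if "0 \<le> M'" for N' M'
  proof -
    have "opt_feasible b t M' (\<lambda>i. 0) (\<lambda>i a. 0)"
      unfolding opt_feasible_def flow_balance_def using that b_pos less_imp_le by auto
    then show ?thesis unfolding S_def by blast
  qed
  define B where "B = (\<Sum>i\<in>UNIV. \<Sum>\<alpha>\<in>UNIV. \<bar>rA p c b t i \<alpha>\<bar> * bsum b \<alpha>)
     + (\<Sum>i\<in>UNIV. \<Sum>\<alpha>\<in>UNIV. rC2P p R b t i \<alpha> * bsum b \<alpha>)"
  have bound: "opt_obj p c R b t N' bC xA \<le> B" if N': "0 < N'" and F: "opt_feasible b t M' bC xA" for N' M' bC xA
  proof -
    have bC0: "0 \<le> bC i" for i using F unfolding opt_feasible_def by simp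
    have xA0: "0 \<le> xA i a" for i a using F unfolding opt_feasible_def by simp
    have colA: "(\<Sum>j\<in>UNIV. xA j a) + bC a \<le> bsum b a" for a using F unfolding opt_feasible_def by simp
    have xAle: "xA i a \<le> bsum b a" for i a
    proof -
      have "xA i a \<le> (\<Sum>j\<in>UNIV. xA j a)" by (rule member_le_sum) (auto simp: xA0)
      then show ?thesis using colA[of a] bC0[of a] by linarith
    qed
    have bCle: "bC a \<le> bsum b a" for a using colA[of a] xA0 by (smt (verit) sum_nonneg)
    have "(\<Sum>i\<in>UNIV. \<Sum>\<alpha>\<in>UNIV. rA p c b t i \<alpha> * xA i \<alpha>) \<le> (\<Sum>i\<in>UNIV. \<Sum>\<alpha>\<in>UNIV. \<bar>rA p c b t i \<alpha>\<bar> * bsum b \<alpha>)"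
    proof (intro sum_mono)
      fix i a
      have "rA p c b t i a * xA i a \<le> \<bar>rA p c b t i a\<bar> * xA i a" using xA0[of i a] by (simp add: mult_right_mono)
      also have "\<dots> \<le> \<bar>rA p c b t i a\<bar> * bsum b a" using xAle[of i a] by (simp add: mult_left_mono)
      finally show "rA p c b t i a * xA i a \<le> \<bar>rA p c b t i a\<bar> * bsum b a" .
    qed
    moreover have "cv_pi p c R b t N' bC \<le> (\<Sum>i\<in>UNIV. \<Sum>\<alpha>\<in>UNIV. rC2P p R b t i \<alpha> * bsum b \<alpha>)"
    proof -
      define x where "x = (SOME x. cv_optimal p c R b t N' bC x)"
      have ox: "cv_optimal p c R b t N' bC x"
        using cv_exists_opt[OF bC0 N' tau] unfolding x_def by (rule someI_ex)
      then have Fx: "cv_feasible b bC x" unfolding cv_optimal_def by simp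
      have x0: "0 \<le> x i a" for i a using Fx unfolding cv_feasible_def by simp
      have xle: "x i a \<le> bsum b a" for i a
      proof -
        have "x i a \<le> (\<Sum>j\<in>UNIV. x j a)" by (rule member_le_sum) (auto simp: x0)
        also have "\<dots> \<le> bC a" using Fx unfolding cv_feasible_def by simp
        finally show ?thesis using bCle[of a] by linarith
      qed
      have r0: "0 \<le> rC2P p R b t i a" for i a unfolding rC2P_def using p_pos R_pos trip_nn by simp
      have "cv_pi p c R b t N' bC = (\<Sum>i\<in>UNIV. \<Sum>\<alpha>\<in>UNIV. rC2P p R b t i \<alpha> * x i \<alpha>)"
        unfolding cv_pi_def x_def Let_def by simp
      also have "\<dots> \<le> (\<Sum>i\<in>UNIV. \<Sum>\<alpha>\<in>UNIV. rC2P p R b t i \<alpha> * bsum b \<alpha>)"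
        by (intro sum_mono mult_left_mono xle r0)
      finally show ?thesis .
    qed
    ultimately show ?thesis unfolding opt_obj_def B_def by linarith
  qed
  have bdd: "bdd_above (S N' M')" if "0 < N'" for N' M'
    unfolding bdd_above_def S_def using bound[OF that] by blast
  have part1: "mono_on {0..} (\<lambda>M'. opt_value p c R b t N M')"
  proof (rule mono_onI)
    fix M1 M2 :: real assume "M1 \<in> {0..}" "M2 \<in> {0..}" "M1 \<le> M2"
    then have sub: "S N M1 \<subseteq> S N M2"
    proof -
      have "opt_feasible b t M2 bC xA" if "opt_feasible b t M1 bC xA" for bC xA
        using that \<open>M1 \<le> M2\<close> unfolding opt_feasible_def by (meson order_trans)
      then show ?thesis unfolding S_def by blast
    qed
    show "opt_value p c R b t N M1 \<le> opt_value p c R b t N M2"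
      unfolding ov using \<open>M1 \<in> {0..}\<close> N_pos by (intro cSup_subset_mono[OF ne bdd sub]) auto
  qed
  have part2: "mono_on {0<..} (\<lambda>N'. opt_value p c R b t N' M)"
  proof (rule mono_onI)
    fix N1 N2 :: real assume N1: "N1 \<in> {0<..}" and N2: "N2 \<in> {0<..}" and le: "N1 \<le> N2"
    show "opt_value p c R b t N1 M \<le> opt_value p c R b t N2 M"
      unfolding ov
    proof (rule cSup_least)
      show "S N1 M \<noteq> {}" using ne M_nonneg by simp
      fix s assume "s \<in> S N1 M"
      then obtain bC xA where s: "s = opt_obj p c R b t N1 bC xA" and F: "opt_feasible b t M bC xA"
        unfolding S_def by blast
      have bC0: "0 \<le> bC i" for i using F unfolding opt_feasible_def by simp
      have "s \<le> opt_obj p c R b t N2 bC xA"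
        unfolding s opt_obj_def
        using pi_mono_N[OF bC0 _ le tau p_pos R_lt1 c_nonneg R_pos] N1 by simp
      also have "\<dots> \<le> Sup (S N2 M)"
        by (rule cSup_upper) (use F bdd N2 in \<open>auto simp: S_def\<close>)
      finally show "s \<le> Sup (S N2 M)" .
    qed
  qed
  show ?thesis using part1 part2 by simp
qed

end
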